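(* Let $\xi>0$, $\omega_0>0$, and define $\omega^2(k)=\frac{\omega_0^2}{\xi^2}\big((\xi-\cos k)^2+\sin^2 k\big)$, $\Omega_0=\frac{\omega_0}{\xi}|1-\xi|$, $\Omega_D=\frac{\omega_0}{\xi}(1+\xi)$, and for an integer $n$ and real $\omega$ with $\omega^2(k)\ne\omega^2$ for all $k$, $$\mathcal G_n(\omega)=\frac{1}{2\pi}\int_0^{2\pi}\frac{e^{ikn}}{\omega^2(k)-\omega^2}\,dk .$$ Then for $\omega>\Omega_D$ and every integer $n$, $$\mathcal G_n(\omega)=\frac{-1}{\sqrt{(\Omega_D^2-\omega^2)(\Omega_0^2-\omega^2)}}\left(\frac{\Omega_D^2+\Omega_0^2-2\omega^2+2\sqrt{(\Omega_D^2-\omega^2)(\Omega_0^2-\omega^2)}}{\Omega_D^2-\Omega_0^2}\right)^{|n|},$$ which is real-valued.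
   Context: $\mathcal G_n$ is the frequency-domain lattice Green's function (entry with $|p-q|=n$) of the exponentially graded linear chain (masses $m_0\xi^{2p}$, spring constants $m_0\xi^{2p}\omega_0^2$) in the limit of infinitely many particles, in the symmetrized variables $y_p=\xi^pu_p$; $\Omega_0$ and $\Omega_D$ are the lowest and highest (Debye) eigenfrequencies. *)

theory Defs
  imports "HOL-Analysis.Analysis"
begin

definition omega_sq :: "real \<Rightarrow> real \<Rightarrow> real \<Rightarrow> real" where
  "omega_sq \<xi> \<omega>\<^sub>0 k = (\<omega>\<^sub>0\<^sup>2 / \<xi>\<^sup>2) * ((\<xi> - cos k)\<^sup>2 + (sin k)\<^sup>2)"

definition Omega0 :: "real \<Rightarrow> real \<Rightarrow> real" where
  "Omega0 \<xi> \<omega>\<^sub>0 = (\<omega>\<^sub>0 / \<xi>) * \<bar>1 - \<xi>\<bar>"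

definition OmegaD :: "real \<Rightarrow> real \<Rightarrow> real" where
  "OmegaD \<xi> \<omega>\<^sub>0 = (\<omega>\<^sub>0 / \<xi>) * (1 + \<xi>)"

definition greenG :: "real \<Rightarrow> real \<Rightarrow> int \<Rightarrow> real \<Rightarrow> complex" where
  "greenG \<xi> \<omega>\<^sub>0 n \<omega> = (1 / (2 * pi)) *
     integral {0..2*pi} (\<lambda>k. cis (k * of_int n) / complex_of_real (omega_sq \<xi> \<omega>\<^sub>0 k - \<omega>\<^sup>2))"

end

theory Submission
  imports Defs
begin

lemma int_cis:
  fixes j :: int
  shows "((\<lambda>k. cis (k * of_int j)) has_integral (if j = 0 then 2*pi else 0)) {0..2*pi}"
proof (cases "j = 0")
  case True
  then show ?thesis using has_integral_const_real[of "1::complex" 0 "2*pi"] by (simp add: scaleR_conv_of_real)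
next
  case False
  have d: "((\<lambda>k. cis (k * of_int j) / (\<i> * of_int j)) has_vector_derivative cis (x * of_int j)) (at x within {0..2*pi})" for x
  proof -
    have "((\<lambda>k. cis (k * of_int j)) has_derivative (\<lambda>t. (t * of_int j) *\<^sub>R (\<i> * cis (x * of_int j)))) (at x within {0..2*pi})"
      by (intro has_derivative_cis derivative_eq_intros) auto
    hence "((\<lambda>k. cis (k * of_int j)) has_vector_derivative (of_int j * (\<i> * cis (x * of_int j)))) (at x within {0..2*pi})"
      unfolding has_vector_derivative_def by (simp add: scaleR_conv_of_real mult.assoc)
    hence "((\<lambda>k. cis (k * of_int j) / (\<i> * of_int j)) has_vector_derivative (of_int j * (\<i> * cis (x * of_int j))) / (\<i> * of_int j)) (at x within {0..2*pi})"
      by (rule has_vector_derivative_divide) 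
    thus ?thesis using False by (simp add: field_simps)
  qed
  have "cis (2 * pi * of_int j) = 1" by (simp add: cis_multiple_2pi)
  hence "cis (2 * pi * of_int j) / (\<i> * of_int j) - cis (0 * of_int j) / (\<i> * of_int j) = 0" by simp
  with fundamental_theorem_of_calculus[of 0 "2*pi" "\<lambda>k. cis (k * of_int j) / (\<i> * of_int j)" "\<lambda>k. cis (k * of_int j)"] d
  show ?thesis using False by (simp add: mult.commute)
qed

lemma denom_bound:
  fixes q t :: real
  assumes "\<bar>q\<bar> < 1"
  shows "1 - \<bar>q\<bar> \<le> norm (1 - complex_of_real q * cis t)"
proof -
  have "norm (1::complex) \<le> norm (1 - complex_of_real q * cis t) + norm (complex_of_real q * cis t)"
    using norm_triangle_ineq[of "1 - complex_of_real q * cis t" "complex_of_real q * cis t"] by simp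
  thus ?thesis by (simp add: norm_mult)
qed

lemma denom_ne:
  fixes q t :: real
  assumes "\<bar>q\<bar> < 1"
  shows "1 - complex_of_real q * cis t \<noteq> 0"
  using denom_bound[OF assms, of t] assms by auto

lemma geo_split:
  fixes x :: complex
  assumes "x \<noteq> 1"
  shows "1 / (1 - x) = (\<Sum>m<N. x ^ m) + x ^ N / (1 - x)"
proof -
  have "1 - x \<noteq> 0" using assms by simp
  thus ?thesis using assms by (simp add: sum_gp_strict field_simps)
qed

lemma sum_delta_lemma:
  fixes q :: real and n e :: int and N :: nat
  assumes "e = 1 \<or> e = -1" "nat \<bar>n\<bar> < N"
  shows "(\<Sum>m<N. complex_of_real (q ^ m) * (if n + e * int m = 0 then 2*pi else 0))
       = (if e * n \<le> 0 then 2 * pi * complex_of_real (q ^ nat \<bar>n\<bar>) else 0)"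
proof (cases "e * n \<le> 0")
  case True
  have "\<And>m. (n + e * int m = 0) = (m = nat \<bar>n\<bar>)" using assms(1) True by auto
  hence "(\<Sum>m<N. complex_of_real (q ^ m) * (if n + e * int m = 0 then 2*pi else 0))
       = (\<Sum>m<N. if m = nat \<bar>n\<bar> then complex_of_real (q ^ m) * 2*pi else 0)"
    by (intro sum.cong) auto
  also have "\<dots> = complex_of_real (q ^ nat \<bar>n\<bar>) * 2*pi" using assms(2) by (simp add: sum.delta')
  finally show ?thesis using True by simp
next
  case False
  have "\<And>m. n + e * int m \<noteq> 0" using assms(1) False by auto
  thus ?thesis using False by simp
qed

lemma cis_geo_int:
  fixes q :: real and n e :: int
  assumes q: "\<bar>q\<bar> < 1" and e: "e = 1 \<or> e = -1"
  shows "integral {0..2*pi} (\<lambda>k. cis (k * of_int n) / (1 - complex_of_real q * cis (k * of_int e)))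
     = (if e * n \<le> 0 then 2 * pi * complex_of_real (q ^ nat \<bar>n\<bar>) else 0)" (is "integral _ ?f = ?T")
proof -
  define I where "I = integral {0..2*pi} ?f"
  have bnd: "norm (I - ?T) \<le> 2 * pi * (\<bar>q\<bar> ^ N / (1 - \<bar>q\<bar>))" if N: "nat \<bar>n\<bar> < N" for N
  proof -
    define R where "R = (\<lambda>k. cis (k * of_int n) * (complex_of_real q * cis (k * of_int e)) ^ N / (1 - complex_of_real q * cis (k * of_int e)))"
    define S where "S = (\<lambda>k. \<Sum>m<N. complex_of_real (q ^ m) * cis (k * of_int (n + e * int m)))"
    have split: "?f k = S k + R k" for k
    proof -
      have ne: "complex_of_real q * cis (k * of_int e) \<noteq> 1" using denom_ne[OF q, of "k * of_int e"] by auto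
      have "?f k = cis (k * of_int n) * (1 / (1 - complex_of_real q * cis (k * of_int e)))" by simp
      also have "\<dots> = cis (k * of_int n) * (\<Sum>m<N. (complex_of_real q * cis (k * of_int e)) ^ m) + R k"
        unfolding geo_split[OF ne, of N] R_def by (simp add: algebra_simps)
      also have "cis (k * of_int n) * (\<Sum>m<N. (complex_of_real q * cis (k * of_int e)) ^ m) = S k"
        unfolding S_def sum_distrib_left
      proof (intro sum.cong refl)
        fix m assume "m \<in> {..<N}"
        have e1: "(complex_of_real q * cis (k * of_int e)) ^ m = complex_of_real (q^m) * cis (real m * (k * of_int e))"
          by (simp only: power_mult_distrib of_real_power Complex.DeMoivre)
        have "cis (k * of_int n) * (complex_of_real q * cis (k * of_int e)) ^ m
            = complex_of_real (q ^ m) * (cis (k * of_int n) * cis (real m * (k * of_int e)))"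
          by (simp only: e1 mult_ac)
        also have "cis (k * of_int n) * cis (real m * (k * of_int e)) = cis (k * of_int (n + e * int m))"
          by (simp add: cis_mult algebra_simps)
        finally show "cis (k * of_int n) * (complex_of_real q * cis (k * of_int e)) ^ m = complex_of_real (q ^ m) * cis (k * of_int (n + e * int m))" .
      qed
      finally show ?thesis .
    qed
    have Sint: "(S has_integral ?T) {0..2*pi}"
    proof -
      have "(S has_integral (\<Sum>m<N. complex_of_real (q ^ m) * (if n + e * int m = 0 then 2*pi else 0))) {0..2*pi}"
        unfolding S_def
        by (intro has_integral_sum finite_lessThan has_integral_mult_right int_cis)
      thus ?thesis using sum_delta_lemma[OF e N, of q] by simp
    qed
    have contR: "continuous_on {0..2*pi} R"
      unfolding R_def using denom_ne[OF q] by (intro continuous_intros) auto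
    have Rbound: "norm (integral {0..2*pi} R) \<le> (\<bar>q\<bar> ^ N / (1 - \<bar>q\<bar>)) * (2*pi - 0)"
    proof (rule integral_bound[OF _ contR])
      fix t
      have "norm (R t) = \<bar>q\<bar> ^ N / norm (1 - complex_of_real q * cis (t * of_int e))"
        unfolding R_def by (simp add: norm_mult norm_divide norm_power)
      also have "\<dots> \<le> \<bar>q\<bar> ^ N / (1 - \<bar>q\<bar>)"
        using denom_bound[OF q, of "t * of_int e"] q by (intro divide_left_mono mult_pos_pos) auto
      finally show "norm (R t) \<le> \<bar>q\<bar> ^ N / (1 - \<bar>q\<bar>)" .
    qed simp
    have "(?f has_integral (?T + integral {0..2*pi} R)) {0..2*pi}"
      unfolding split[abs_def]
      by (intro has_integral_add Sint integrable_integral integrable_continuous_interval contR)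
    hence "I = ?T + integral {0..2*pi} R" unfolding I_def by (rule integral_unique)
    thus ?thesis using Rbound by (simp add: algebra_simps)
  qed
  show ?thesis
  proof (rule ccontr)
    assume "integral {0..2*pi} ?f \<noteq> ?T"
    hence pos: "norm (I - ?T) > 0" unfolding I_def by simp
    define D where "D = norm (I - ?T)"
    have Dpos: "D > 0" using pos unfolding D_def .
    have "0 < D * (1 - \<bar>q\<bar>) / (2 * pi)" using Dpos q by simp
    then obtain N0 where N0: "\<bar>q\<bar> ^ N0 < D * (1 - \<bar>q\<bar>) / (2 * pi)"
      using real_arch_pow_inv q by blast
    define N where "N = N0 + nat \<bar>n\<bar> + 1"
    have "\<bar>q\<bar> ^ N \<le> \<bar>q\<bar> ^ N0" unfolding N_def using q by (intro power_decreasing) auto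
    with N0 have "\<bar>q\<bar> ^ N < D * (1 - \<bar>q\<bar>) / (2 * pi)" by linarith
    hence "2 * pi * (\<bar>q\<bar> ^ N / (1 - \<bar>q\<bar>)) < D"
      using q pi_gt_zero by (simp add: field_simps)
    hence "2 * pi * (\<bar>q\<bar> ^ N / (1 - \<bar>q\<bar>)) < norm (I - ?T)" unfolding D_def .
    moreover have "nat \<bar>n\<bar> < N" unfolding N_def by simp
    ultimately show False using bnd by fastforce
  qed
qed

lemma pw_lemma:
  fixes a b q s k :: real and n :: int
  assumes b: "b > 0" and ab: "a + b < 0" and q1: "\<bar>q\<bar> < 1" and qneg: "q < 0" and spos: "s > 0"
    and qeq: "2 * a * q = b * (1 + q^2)" and coef: "2 * q / b = - (1 - q^2) / s"
  shows "cis (k * of_int n) / complex_of_real (a - b * cos k)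
     = complex_of_real (-1/s) * (cis (k * of_int n) / (1 - complex_of_real q * cis (k * of_int 1))
        + cis (k * of_int n) / (1 - complex_of_real q * cis (k * of_int (-1))) - cis (k * of_int n))"
  proof -
    define z where "z = complex_of_real q * cis k"
    define w where "w = complex_of_real q * cis (-k)"
    have z1: "1 - z \<noteq> 0" unfolding z_def using denom_ne[OF q1, of k] .
    have w1: "1 - w \<noteq> 0" unfolding w_def using denom_ne[OF q1, of "-k"] .
    have zw: "z * w = complex_of_real (q^2)" unfolding z_def w_def
      by (simp add: power2_eq_square algebra_simps cis_mult)
    have zpw: "z + w = complex_of_real (2 * q * cos k)" unfolding z_def w_def
      by (simp add: cis.ctr complex_eq_iff)
    have den: "(1 - z) * (1 - w) = complex_of_real (1 - 2 * q * cos k + q^2)"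
    proof -
      have "(1 - z) * (1 - w) = 1 - (z + w) + z * w" by (simp add: algebra_simps)
      thus ?thesis using zw zpw by simp
    qed
    have "b * (1 - 2 * q * cos k + q^2) = 2 * q * (a - b * cos k)"
      using qeq by (simp add: algebra_simps)
    hence rden: "1 - 2 * q * cos k + q^2 = (2 * q / b) * (a - b * cos k)"
      using b by (simp add: field_simps)
    have abc: "a - b * cos k < 0"
    proof -
      have "- cos k \<le> 1" using abs_cos_le_one[of k] by linarith
      hence "b * (- cos k) \<le> b * 1" using b by (intro mult_left_mono) auto
      thus ?thesis using ab by simp
    qed
    have "1 / (1 - z) + 1 / (1 - w) - 1 = (1 - z * w) / ((1 - z) * (1 - w))"
    proof -
      have nz: "(1 - z) * (1 - w) \<noteq> 0" using z1 w1 by simp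
      have nz': "1 + w * z - (w + z) \<noteq> 0" using nz by (simp add: algebra_simps)
      show ?thesis using z1 w1 nz nz' by (simp add: field_simps)
    qed
    also have "\<dots> = complex_of_real ((1 - q^2) / ((2 * q / b) * (a - b * cos k)))"
      unfolding zw den rden by simp
    also have "(1 - q^2) / ((2 * q / b) * (a - b * cos k)) = - s / (a - b * cos k)"
    proof -
      have "q^2 < 1" using q1 by (simp add: abs_square_less_1)
      hence x0: "1 - q^2 \<noteq> 0" by simp
      have A0: "a - b * cos k \<noteq> 0" using abc by simp
      show ?thesis unfolding coef using x0 A0 spos by (simp add: divide_simps) (simp add: algebra_simps)
    qed
    finally have key: "1 / (1 - z) + 1 / (1 - w) - 1 = complex_of_real (- s / (a - b * cos k))" .
    have "cis (k * of_int n) / (1 - complex_of_real q * cis (k * of_int 1))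
        + cis (k * of_int n) / (1 - complex_of_real q * cis (k * of_int (-1))) - cis (k * of_int n)
        = cis (k * of_int n) * (1 / (1 - z) + 1 / (1 - w) - 1)"
      unfolding z_def w_def by (simp add: algebra_simps)
    also have "\<dots> = cis (k * of_int n) * complex_of_real (- s / (a - b * cos k))" by (simp only: key)
    finally have e: "cis (k * of_int n) / (1 - complex_of_real q * cis (k * of_int 1))
        + cis (k * of_int n) / (1 - complex_of_real q * cis (k * of_int (-1))) - cis (k * of_int n)
        = cis (k * of_int n) * complex_of_real (- s / (a - b * cos k))" .
    have "a - b * cos k \<noteq> 0" using abc by simp
    hence "complex_of_real (a - b * cos k) \<noteq> 0" by (simp only: of_real_eq_0_iff not_False_eq_True)
    thus ?thesis unfolding e using spos by (simp add: field_simps)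
  qed


lemma green_generic:
  fixes a b :: real and n :: int
  assumes b: "b > 0" and ab: "a + b < 0"
  defines "s \<equiv> sqrt ((a + b) * (a - b))"
  defines "q \<equiv> (a + s) / b"
  shows "integral {0..2*pi} (\<lambda>k. cis (k * of_int n) / complex_of_real (a - b * cos k))
         = 2 * pi * complex_of_real (- (q ^ nat \<bar>n\<bar>) / s)"
proof -
  have amb: "a - b < 0" using ab b by simp
  have prodpos: "(a + b) * (a - b) > 0" using ab amb by (simp add: mult_neg_neg)
  have spos: "s > 0" unfolding s_def using prodpos by simp
  have s2': "s^2 = (a + b) * (a - b)" unfolding s_def using prodpos by simp
  have s2: "s^2 = a^2 - b^2" unfolding s2' by (simp add: power2_eq_square algebra_simps)
  have "s^2 < \<bar>a\<bar>^2" using s2 b by simp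
  hence "s < \<bar>a\<bar>" by (rule power_less_imp_less_base) simp
  have aneg: "a < 0" using ab b by simp
  have "s < - a" using \<open>s < \<bar>a\<bar>\<close> aneg by simp
  hence qneg: "q < 0" unfolding q_def using b by (simp add: divide_neg_pos)
  have "(a+b)^2 - s^2 = 2 * b * (a + b)" unfolding s2' by (simp add: power2_eq_square algebra_simps)
  also have "\<dots> < 0" using b ab by (simp add: mult_pos_neg)
  finally have "(a+b)^2 < s^2" by simp
  hence "(-(a+b))^2 < s^2" by (simp only: power2_minus)
  hence "-(a+b) < s" by (rule power_less_imp_less_base) (use spos in simp)
  hence "q > -1" unfolding q_def using b by (simp add: field_simps)
  hence q1: "\<bar>q\<bar> < 1" using qneg by simp
  have bq: "b * q = a + s" unfolding q_def using b by simp
  have "b * (2 * a * q - b * (1 + q^2)) = 2 * a * (b * q) - b^2 - (b * q)^2"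
    by (simp add: power2_eq_square algebra_simps)
  also have "\<dots> = a^2 - b^2 - s^2" unfolding bq by (simp add: power2_eq_square algebra_simps)
  also have "\<dots> = 0" using s2 by simp
  finally have qeq: "2 * a * q = b * (1 + q^2)" using b by simp
  have "b * (q * (s - a)) = (b * q) * (s - a)" by (simp add: algebra_simps)
  also have "\<dots> = (a + s) * (s - a)" unfolding bq ..
  also have "\<dots> = s^2 - a^2" by (simp add: power2_eq_square algebra_simps)
  also have "\<dots> = b * (-b)" using s2 by (simp add: power2_eq_square)
  finally have h: "b * (q * (s - a)) = b * (- b)" .
  have "b \<noteq> 0" using b by simp
  hence qsa: "q * (s - a) = - b" using h mult_left_cancel by blast
  have "2 * q * s = 2 * (q * (s - a)) + 2 * a * q" by (simp add: algebra_simps)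
  also have "\<dots> = b * (q^2 - 1)" unfolding qsa qeq by (simp add: algebra_simps)
  finally have "2 * q * s = b * (q^2 - 1)" .
  hence coef: "2 * q / b = - (1 - q^2) / s" using b spos by (simp add: field_simps)
  define F where "F = (\<lambda>e::int. (\<lambda>k. cis (k * of_int n) / (1 - complex_of_real q * cis (k * of_int e))))"
  have pw: "(\<lambda>k. cis (k * of_int n) / complex_of_real (a - b * cos k))
     = (\<lambda>k. complex_of_real (-1/s) * (F 1 k + F (-1) k - cis (k * of_int n)))"
    unfolding F_def using pw_lemma[OF b ab q1 qneg spos qeq coef] by blast
  have cF: "continuous_on {0..2*pi} (F e)" for e
    unfolding F_def using denom_ne[OF q1] by (intro continuous_intros) auto
  have iF: "(F e has_integral integral {0..2*pi} (F e)) {0..2*pi}" for e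
    using cF integrable_continuous_interval integrable_integral by blast
  have "((\<lambda>k. complex_of_real (-1/s) * (F 1 k + F (-1) k - cis (k * of_int n))) has_integral
      complex_of_real (-1/s) * (integral {0..2*pi} (F 1) + integral {0..2*pi} (F (-1)) - (if n = 0 then 2*pi else 0))) {0..2*pi}"
    by (intro has_integral_mult_right has_integral_diff has_integral_add iF int_cis)
  moreover have "integral {0..2*pi} (F 1) + integral {0..2*pi} (F (-1)) - (if n = 0 then 2*pi else 0)
      = 2 * pi * complex_of_real (q ^ nat \<bar>n\<bar>)"
    unfolding F_def using cis_geo_int[OF q1, of 1 n] cis_geo_int[OF q1, of "-1" n] by auto
  ultimately have "((\<lambda>k. cis (k * of_int n) / complex_of_real (a - b * cos k)) has_integral
      complex_of_real (-1/s) * (2 * pi * complex_of_real (q ^ nat \<bar>n\<bar>))) {0..2*pi}"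
    unfolding pw by simp
  thus ?thesis by (simp add: integral_unique)
qed


theorem mainTheorem3:
  fixes \<xi> \<omega>\<^sub>0 \<omega> :: real and n :: int
  assumes "\<xi> > 0" and "\<omega>\<^sub>0 > 0" and "\<omega> > OmegaD \<xi> \<omega>\<^sub>0"
  shows "greenG \<xi> \<omega>\<^sub>0 n \<omega> = complex_of_real (
     (-1 / sqrt (((OmegaD \<xi> \<omega>\<^sub>0)\<^sup>2 - \<omega>\<^sup>2) * ((Omega0 \<xi> \<omega>\<^sub>0)\<^sup>2 - \<omega>\<^sup>2))) *
     (((OmegaD \<xi> \<omega>\<^sub>0)\<^sup>2 + (Omega0 \<xi> \<omega>\<^sub>0)\<^sup>2 - 2 * \<omega>\<^sup>2
        + 2 * sqrt (((OmegaD \<xi> \<omega>\<^sub>0)\<^sup>2 - \<omega>\<^sup>2) * ((Omega0 \<xi> \<omega>\<^sub>0)\<^sup>2 - \<omega>\<^sup>2)))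
      / ((OmegaD \<xi> \<omega>\<^sub>0)\<^sup>2 - (Omega0 \<xi> \<omega>\<^sub>0)\<^sup>2)) ^ nat \<bar>n\<bar>)"
proof -
  note xi = assms(1) and w0 = assms(2) and w = assms(3)
  define a where "a = \<omega>\<^sub>0\<^sup>2 * (1 + \<xi>\<^sup>2) / \<xi>\<^sup>2 - \<omega>\<^sup>2"
  define b where "b = 2 * \<omega>\<^sub>0\<^sup>2 / \<xi>"
  have bpos: "b > 0" unfolding b_def using xi w0 by simp
  have hD: "(OmegaD \<xi> \<omega>\<^sub>0)\<^sup>2 - \<omega>\<^sup>2 = a + b"
    unfolding OmegaD_def a_def b_def using xi by (simp add: field_simps power2_eq_square)
  have h0: "(Omega0 \<xi> \<omega>\<^sub>0)\<^sup>2 - \<omega>\<^sup>2 = a - b"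
    unfolding Omega0_def a_def b_def using xi by (simp add: field_simps power2_eq_square power_mult_distrib abs_mult_self_eq)
  have hsum: "(OmegaD \<xi> \<omega>\<^sub>0)\<^sup>2 + (Omega0 \<xi> \<omega>\<^sub>0)\<^sup>2 - 2 * \<omega>\<^sup>2 = 2 * a"
    using hD h0 by simp
  have hdiff: "(OmegaD \<xi> \<omega>\<^sub>0)\<^sup>2 - (Omega0 \<xi> \<omega>\<^sub>0)\<^sup>2 = 2 * b"
    using hD h0 by simp
  have Dpos: "OmegaD \<xi> \<omega>\<^sub>0 > 0" unfolding OmegaD_def using xi w0 by simp
  have "(OmegaD \<xi> \<omega>\<^sub>0)\<^sup>2 < \<omega>\<^sup>2" using Dpos w by (intro power_strict_mono) auto
  hence ab: "a + b < 0" using hD by simp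
  have om: "omega_sq \<xi> \<omega>\<^sub>0 k - \<omega>\<^sup>2 = a - b * cos k" for k
  proof -
    have "(\<xi> - cos k)\<^sup>2 + (sin k)\<^sup>2 = \<xi>\<^sup>2 + 1 - 2 * \<xi> * cos k"
      using sin_cos_squared_add[of k] by (simp add: power2_eq_square algebra_simps)
    thus ?thesis unfolding omega_sq_def a_def b_def using xi by (simp add: field_simps power2_eq_square)
  qed
  define s where "s = sqrt ((a + b) * (a - b))"
  define q where "q = (a + s) / b"
  have G: "integral {0..2*pi} (\<lambda>k. cis (k * of_int n) / complex_of_real (a - b * cos k))
         = 2 * pi * complex_of_real (- (q ^ nat \<bar>n\<bar>) / s)"
    unfolding s_def q_def by (rule green_generic[OF bpos ab])
  have lhs: "greenG \<xi> \<omega>\<^sub>0 n \<omega> = complex_of_real (- (q ^ nat \<bar>n\<bar>) / s)"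
    unfolding greenG_def om G by simp
  have rq: "(2 * a + 2 * s) / (2 * b) = q" unfolding q_def using bpos by (simp add: field_simps)
  show ?thesis unfolding lhs hsum hdiff hD h0 s_def[symmetric] rq by simp
qed

end
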